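(* Let $p\ge5$ be a prime and let $\alpha=\frac{P+\sqrt D}{Q}\in\mathbb{Q}_p$, where $P,Q\in\mathbb{Z}$, $Q\ne0$, $D$ is a non-square integer with $\sqrt D\in\mathbb{Q}_p$, and $Q\mid D-P^2$. Let $N=\lceil\log_2 p\rceil$. Define sequences by $P_0=P$, $Q_0=Q$, $\alpha_n=\frac{P_n+\sqrt D}{Q_n}$, $b_n=\bar s(\alpha_n)$ if $N\mid n$ and $b_n=\bar t(\alpha_n)$ otherwise (i.e. $b_{Nk}=\bar s(\alpha_{Nk})$ and $b_{Nk+j}=\bar t(\alpha_{Nk+j})$ for $1\le j\le N-1$), and $P_{n+1}=b_nQ_n-P_n$, $Q_{n+1}=\frac{D-P_{n+1}^2}{Q_n}$ (so that $\alpha_{n+1}=\frac{1}{\alpha_n-b_n}$), and assume all $b_n$ are nonzero. Let $M=\max\left\{|Q|,\ \frac{p^2}{4}|D|+1,\ \frac{4(p^2+1)}{3}\right\}$. Then $|Q_n|\le\frac{p^2}{4}M+1$ for all $n\ge0$.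
   Context: Let $\mathcal{R}=\{-\frac{p-1}{2},\dots,0,\dots,\frac{p-1}{2}\}$. Every nonzero $\beta\in\mathbb{Q}_p$ is written uniquely as $\beta=\sum_{n\ge r}a_np^n$ with $r=v_p(\beta)$, $a_n\in\mathcal{R}$, $a_r\ne0$. Put $s(\beta)=\sum_{n=r}^{0}a_np^n$, $t(\beta)=\sum_{n=r}^{-1}a_np^n$ (empty sums are $0$). With $\operatorname{round}(x)$ the integer nearest to the real $x$, for $\beta=\frac{P'+\sqrt D}{Q'}$ ($P',Q'\in\mathbb{Q}$, $Q'\ne0$) define $\bar s(\beta)=\operatorname{round}\!\left(\frac{P'/Q'-s(\beta)}{p}\right)p+s(\beta)$ and $\bar t(\beta)=\operatorname{round}\!\left(P'/Q'-t(\beta)\right)+t(\beta)$. Absolute values $|\cdot|$ are the usual real ones. *)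

theory Defs
  imports Complex_Main "HOL-Computational_Algebra.Primes"
begin

text \<open>q lies in p^m Z_(p) (rationals with p-adic valuation at least m, or zero).\<close>
definition in_pZ :: "nat \<Rightarrow> int \<Rightarrow> rat \<Rightarrow> bool" where
  "in_pZ p m q \<longleftrightarrow> (\<exists>a b::int. b \<noteq> 0 \<and> \<not> int p dvd b \<and>
      q = of_int a / of_int b * (of_nat p) powi m)"

text \<open>r is a p-adic Cauchy sequence of rationals converging to a square root of D in Q_p;
  its limit plays the role of sqrt D.\<close>
definition is_padic_sqrt_seq :: "nat \<Rightarrow> int \<Rightarrow> (nat \<Rightarrow> rat) \<Rightarrow> bool" where
  "is_padic_sqrt_seq p D r \<longleftrightarrow>
     (\<forall>n. in_pZ p (int n) (r (Suc n) - r n) \<and> in_pZ p (int n) ((r n)^2 - of_int D))"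

text \<open>(P' + sqrt D)/Q' - x lies in p^m Z_p, where sqrt D = lim r.\<close>
definition padic_cong :: "nat \<Rightarrow> (nat \<Rightarrow> rat) \<Rightarrow> rat \<Rightarrow> rat \<Rightarrow> rat \<Rightarrow> int \<Rightarrow> bool" where
  "padic_cong p r P' Q' x m \<longleftrightarrow>
     (\<exists>n0. \<forall>n\<ge>n0. in_pZ p m ((P' + r n) / Q' - x))"

definition dig_upto0 :: "nat \<Rightarrow> rat \<Rightarrow> bool" where
  "dig_upto0 p x \<longleftrightarrow> (\<exists>k (a::nat \<Rightarrow> int). (\<forall>i\<le>k. 2 * \<bar>a i\<bar> \<le> int p - 1) \<and>
      x = (\<Sum>i\<le>k. of_int (a i) / (of_nat p) ^ i))"

definition dig_below0 :: "nat \<Rightarrow> rat \<Rightarrow> bool" where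
  "dig_below0 p x \<longleftrightarrow> (\<exists>k (a::nat \<Rightarrow> int). (\<forall>i\<in>{1..k}. 2 * \<bar>a i\<bar> \<le> int p - 1) \<and>
      x = (\<Sum>i\<in>{1..k}. of_int (a i) / (of_nat p) ^ i))"

text \<open>s(beta) and t(beta) for beta = (P' + sqrt D)/Q': the truncations of the balanced
  p-adic expansion, i.e. the unique balanced-digit sums with beta - s in pZ_p, beta - t in Z_p.\<close>
definition s_fun :: "nat \<Rightarrow> (nat \<Rightarrow> rat) \<Rightarrow> rat \<Rightarrow> rat \<Rightarrow> rat" where
  "s_fun p r P' Q' = (THE x. dig_upto0 p x \<and> padic_cong p r P' Q' x 1)"

definition t_fun :: "nat \<Rightarrow> (nat \<Rightarrow> rat) \<Rightarrow> rat \<Rightarrow> rat \<Rightarrow> rat" where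
  "t_fun p r P' Q' = (THE x. dig_below0 p x \<and> padic_cong p r P' Q' x 0)"

definition sbar :: "nat \<Rightarrow> (nat \<Rightarrow> rat) \<Rightarrow> rat \<Rightarrow> rat \<Rightarrow> rat" where
  "sbar p r P' Q' = (let s = s_fun p r P' Q' in
      of_int (round ((P' / Q' - s) / of_nat p)) * of_nat p + s)"

definition tbar :: "nat \<Rightarrow> (nat \<Rightarrow> rat) \<Rightarrow> rat \<Rightarrow> rat \<Rightarrow> rat" where
  "tbar p r P' Q' = (let t = t_fun p r P' Q' in
      of_int (round (P' / Q' - t)) + t)"

end

theory Submission
  imports Defs
begin

lemma inpZ_iff: "in_pZ p (int m) q \<longleftrightarrow> (\<exists>a b::int. b \<noteq> 0 \<and> \<not> int p dvd b \<and>
      q = of_int a / of_int b * (of_nat p) ^ m)"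
  by (simp add: in_pZ_def power_int_of_nat)

lemma inpZ_I: "b \<noteq> 0 \<Longrightarrow> \<not> int p dvd b \<Longrightarrow> q = of_int a / of_int b * (of_nat p) ^ m \<Longrightarrow> in_pZ p (int m) q"
  using inpZ_iff by blast

lemma inpZ_E: assumes "in_pZ p (int m) q"
  obtains a b :: int where "b \<noteq> 0" "\<not> int p dvd b" "q = of_int a / of_int b * (of_nat p) ^ m"
  using assms inpZ_iff by blast

lemma inpZ_0: "prime p \<Longrightarrow> in_pZ p (int m) 0"
  by (rule inpZ_I[of 1 p _ 0]) (auto simp: prime_gt_1_nat)

lemma inpZ_int: "prime p \<Longrightarrow> in_pZ p 0 (of_int a)"
  using inpZ_I[of 1 p "of_int a" a 0] prime_gt_1_nat[of p] by simp

lemma inpZ_add: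
  assumes "prime p" "in_pZ p (int m) x" "in_pZ p (int m) y"
  shows "in_pZ p (int m) (x + y)"
proof -
  obtain a b where ab: "b \<noteq> 0" "\<not> int p dvd b" "x = of_int a / of_int b * (of_nat p) ^ m"
    using assms(2) by (rule inpZ_E)
  obtain c d where cd: "d \<noteq> 0" "\<not> int p dvd d" "y = of_int c / of_int d * (of_nat p) ^ m"
    using assms(3) by (rule inpZ_E)
  have pr: "prime (int p)" using assms(1) by simp
  show ?thesis
  proof (rule inpZ_I[of "b*d" _ _ "a*d + c*b"])
    show "b * d \<noteq> 0" using ab cd by simp
    show "\<not> int p dvd b * d" using ab cd pr by (simp add: prime_dvd_mult_iff)
    show "x + y = of_int (a * d + c * b) / of_int (b * d) * of_nat p ^ m"
      using ab cd by (simp add: field_simps)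
  qed
qed

lemma inpZ_neg:
  assumes "in_pZ p (int m) x" shows "in_pZ p (int m) (- x)"
proof -
  obtain a b where ab: "b \<noteq> 0" "\<not> int p dvd b" "x = of_int a / of_int b * (of_nat p) ^ m"
    using assms by (rule inpZ_E)
  show ?thesis by (rule inpZ_I[of b _ _ "-a"]) (use ab in auto)
qed

lemma inpZ_diff:
  assumes "prime p" "in_pZ p (int m) x" "in_pZ p (int m) y"
  shows "in_pZ p (int m) (x - y)"
  using inpZ_add[OF assms(1,2) inpZ_neg[OF assms(3)]] by simp

lemma inpZ_mult:
  assumes "prime p" "in_pZ p (int m) x" "in_pZ p (int n) y"
  shows "in_pZ p (int (m + n)) (x * y)"
proof -
  obtain a b where ab: "b \<noteq> 0" "\<not> int p dvd b" "x = of_int a / of_int b * (of_nat p) ^ m"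
    using assms(2) by (rule inpZ_E)
  obtain c d where cd: "d \<noteq> 0" "\<not> int p dvd d" "y = of_int c / of_int d * (of_nat p) ^ n"
    using assms(3) by (rule inpZ_E)
  have pr: "prime (int p)" using assms(1) by simp
  show ?thesis
  proof (rule inpZ_I[of "b*d" _ _ "a*c"])
    show "b * d \<noteq> 0" using ab cd by simp
    show "\<not> int p dvd b * d" using ab cd pr by (simp add: prime_dvd_mult_iff)
    show "x * y = of_int (a * c) / of_int (b * d) * of_nat p ^ (m + n)"
      using ab cd by (simp add: field_simps power_add)
  qed
qed

lemma inpZ_mono:
  assumes "in_pZ p (int m) x" "k \<le> m"
  shows "in_pZ p (int k) x"
proof -
  obtain a b where ab: "b \<noteq> 0" "\<not> int p dvd b" "x = of_int a / of_int b * (of_nat p) ^ m"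
    using assms(1) by (rule inpZ_E)
  have "(of_nat p :: rat) ^ m = of_nat p ^ (m - k) * of_nat p ^ k"
    using assms(2) by (simp add: power_add[symmetric])
  then show ?thesis
    by (intro inpZ_I[of b _ _ "a * int p ^ (m - k)"]) (use ab in auto)
qed

lemma inpZ_dvd:
  assumes "prime p" "in_pZ p (int j) (of_int C / (of_nat p) ^ K)"
  shows "int p ^ (K + j) dvd C"
proof -
  obtain a b where ab: "b \<noteq> 0" "\<not> int p dvd b" "of_int C / (of_nat p) ^ K = (of_int a / of_int b * (of_nat p) ^ j :: rat)"
    using assms(2) by (rule inpZ_E)
  have p0: "(of_nat p :: rat) \<noteq> 0" using assms(1) prime_gt_0_nat by simp
  have "(of_int (C * b) :: rat) = of_int (a * int p ^ (K + j))"
    using ab(1,3) p0 by (simp add: field_simps power_add)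
  then have eq: "C * b = a * int p ^ (K + j)" by (simp only: of_int_eq_iff)
  have "coprime (int p ^ (K + j)) b"
    using prime_imp_coprime[of "int p" b] assms(1) ab(2) by simp
  moreover have "int p ^ (K + j) dvd C * b" using eq by simp
  ultimately show ?thesis using coprime_dvd_mult_left_iff by blast
qed


lemma balanced_res:
  assumes "prime p" "odd p"
  shows "\<exists>d::int. 2 * \<bar>d\<bar> \<le> int p - 1 \<and> int p dvd A - d"
proof -
  have p1: "int p > 1" using assms prime_gt_1_nat by simp
  define m where "m = A mod int p"
  have m: "0 \<le> m" "m < int p" using p1 by (auto simp: m_def)
  have dv: "int p dvd A - m" unfolding m_def by (simp add: minus_mod_eq_mult_div)
  have oddp: "odd (int p)" using assms by simp
  show ?thesis
  proof (cases "2 * m \<le> int p - 1")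
    case True then show ?thesis using m dv by (intro exI[of _ m]) auto
  next
    case False
    have "2 * m \<noteq> int p"
    proof
      assume "2 * m = int p"
      then have "even (int p)" by (metis dvd_triv_left)
      with oddp show False by simp
    qed
    with False have "2 * m \<ge> int p + 1" by linarith
    moreover have "A - (m - int p) = (A - m) + int p" by simp
    then have "int p dvd A - (m - int p)" using dv by (simp only: dvd_add dvd_refl)
    ultimately show ?thesis using m by (intro exI[of _ "m - int p"]) auto
  qed
qed

lemma digits_exist:
  assumes "prime p" "odd p"
  shows "\<exists>a::nat\<Rightarrow>int. (\<forall>i\<le>k. 2 * \<bar>a i\<bar> \<le> int p - 1) \<and>
     in_pZ p 1 (of_int A / (of_nat p)^k - (\<Sum>i\<le>k. of_int (a i) / (of_nat p) ^ i))"
proof (induction k arbitrary: A)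
  case 0
  obtain d where d: "2 * \<bar>d\<bar> \<le> int p - 1" "int p dvd A - d" using balanced_res[OF assms] by blast
  then obtain c where c: "A - d = int p * c" by (auto elim: dvdE)
  have "in_pZ p (int 1) (of_int A / (of_nat p)^0 - (\<Sum>i\<le>0. of_int ((\<lambda>_. d) i) / (of_nat p) ^ i))"
    by (rule inpZ_I[of 1 _ _ c]) (use c assms prime_gt_1_nat in \<open>auto simp: of_int_diff[symmetric] simp del: of_int_diff\<close>)
  then show ?case using d by (intro exI[of _ "\<lambda>_. d"]) simp
next
  case (Suc k)
  obtain d where d: "2 * \<bar>d\<bar> \<le> int p - 1" "int p dvd A - d" using balanced_res[OF assms] by blast
  from d(2) obtain A' where "A - d = int p * A'" by (rule dvdE)
  then have A': "A = d + int p * A'" by simp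
  obtain a where a: "\<forall>i\<le>k. 2 * \<bar>a i\<bar> \<le> int p - 1"
    "in_pZ p 1 (of_int A' / (of_nat p)^k - (\<Sum>i\<le>k. of_int (a i) / (of_nat p) ^ i))"
    using Suc.IH by blast
  define a2 where "a2 = a(Suc k := d)"
  have p0: "(of_nat p :: rat) \<noteq> 0" using assms prime_gt_0_nat by simp
  have s: "(\<Sum>i\<le>Suc k. of_int (a2 i) / (of_nat p :: rat) ^ i) =
      (\<Sum>i\<le>k. of_int (a i) / (of_nat p) ^ i) + of_int d / (of_nat p)^(Suc k)"
    by (simp add: a2_def)
  have e: "(of_int A / (of_nat p :: rat)^(Suc k)) = of_int A' / (of_nat p)^k + of_int d / (of_nat p)^(Suc k)"
    using p0 by (simp add: A' field_simps)
  have eq: "of_int A / (of_nat p)^(Suc k) - (\<Sum>i\<le>Suc k. of_int (a2 i) / (of_nat p :: rat) ^ i)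
     = of_int A' / (of_nat p)^k - (\<Sum>i\<le>k. of_int (a i) / (of_nat p) ^ i)"
    by (simp only: s e)
  have b2: "\<forall>i\<le>Suc k. 2 * \<bar>a2 i\<bar> \<le> int p - 1"
    using a(1) d(1) unfolding a2_def by (auto simp: le_Suc_eq)
  show ?case
    using a(2) b2 eq by (intro exI[of _ a2]) simp
qed

lemma pfactor:
  assumes "prime p" "(w::int) \<noteq> 0"
  obtains v u where "w = int p ^ v * u" "\<not> int p dvd u" "u \<noteq> 0"
proof -
  define v where "v = multiplicity (int p) w"
  define u where "u = w div int p ^ v"
  have "\<not> is_unit (int p)" using prime_gt_1_nat[OF assms(1)] by simp
  then have nd: "\<not> int p dvd u" using multiplicity_decompose[OF assms(2)] unfolding u_def v_def by blast
  have eq: "w = int p ^ v * u" unfolding u_def v_def using multiplicity_dvd[of "int p" w] by simp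
  have "u \<noteq> 0" using eq assms(2) by auto
  then show ?thesis using that eq nd by blast
qed

lemma s_exists:
  assumes "prime p" "odd p"
  shows "\<exists>x. dig_upto0 p x \<and> in_pZ p 1 (y - x)"
proof -
  obtain e w where ew: "quotient_of y = (e, w)" by (cases "quotient_of y") auto
  have y: "y = of_int e / of_int w" and w: "w > 0" using ew quotient_of_div quotient_of_denom_pos by auto
  have "w \<noteq> 0" using w by simp
  then obtain v u where vu: "w = int p ^ v * u" "\<not> int p dvd u" "u \<noteq> 0" by (rule pfactor[OF assms(1)])
  have "coprime (int p) u" using prime_imp_coprime[of "int p" u] assms(1) vu(2) by simp
  then have "coprime u (int p ^ Suc v)" by (simp add: coprime_commute)
  then obtain s t where st: "s * u + t * int p ^ Suc v = 1" using bezout_int[of u "int p ^ Suc v"] by auto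
  define A where "A = e * s"
  obtain a where a: "\<forall>i\<le>v. 2 * \<bar>a i\<bar> \<le> int p - 1"
    "in_pZ p 1 (of_int A / (of_nat p)^v - (\<Sum>i\<le>v. of_int (a i) / (of_nat p) ^ i))"
    using digits_exist[OF assms] by blast
  have p0: "(of_nat p :: rat) \<noteq> 0" using assms prime_gt_0_nat by simp
  have "e - A * u = e * (s * u + t * int p ^ Suc v) - A * u" using st by simp
  also have "\<dots> = e * t * int p ^ Suc v" unfolding A_def by (simp add: algebra_simps)
  finally have ee: "e - A * u = e * t * int p ^ Suc v" .
  have "y - of_int A / (of_nat p)^v = of_int (e - A * u) / (of_int u * (of_nat p)^v)"
    using vu(3) p0 by (simp add: y vu(1) field_simps)
  also have "\<dots> = of_int (e * t) / of_int u * (of_nat p) ^ 1"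
    using vu(3) p0 by (simp only: ee) (simp add: field_simps)
  finally have "in_pZ p (int 1) (y - of_int A / (of_nat p)^v)"
    using vu by (intro inpZ_I[of u _ _ "e*t"]) auto
  moreover have "in_pZ p (int 1) (of_int A / (of_nat p)^v - (\<Sum>i\<le>v. of_int (a i) / (of_nat p) ^ i))"
    using a(2) by simp
  ultimately have "in_pZ p (int 1) ((y - of_int A / (of_nat p)^v) + (of_int A / (of_nat p)^v - (\<Sum>i\<le>v. of_int (a i) / (of_nat p) ^ i)))"
    by (rule inpZ_add[OF assms(1)])
  then have "in_pZ p 1 (y - (\<Sum>i\<le>v. of_int (a i) / (of_nat p) ^ i))" by simp
  moreover have "dig_upto0 p (\<Sum>i\<le>v. of_int (a i) / (of_nat p) ^ i)"
    unfolding dig_upto0_def using a(1) by blast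
  ultimately show ?thesis by blast
qed

lemma t_exists:
  assumes "prime p" "odd p"
  shows "\<exists>x. dig_below0 p x \<and> in_pZ p 0 (y - x)"
proof -
  obtain x where x: "dig_upto0 p x" "in_pZ p 1 (y - x)" using s_exists[OF assms] by blast
  obtain k a where ka: "\<forall>i\<le>k. 2 * \<bar>a i\<bar> \<le> int p - 1" "x = (\<Sum>i\<le>k. of_int (a i) / (of_nat p) ^ i)"
    using x(1) unfolding dig_upto0_def by blast
  have "{..k} = insert 0 {1..k}" by auto
  then have xs: "x = of_int (a 0) + (\<Sum>i\<in>{1..k}. of_int (a i) / (of_nat p) ^ i)"
    using ka(2) by simp
  have "in_pZ p (int 0) (y - x)" using inpZ_mono[of p 1 "y-x" 0] x(2) by simp
  moreover have "in_pZ p (int 0) (of_int (a 0))" using inpZ_int[OF assms(1)] by simp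
  ultimately have "in_pZ p (int 0) ((y - x) + of_int (a 0))" by (rule inpZ_add[OF assms(1)])
  then
  have "in_pZ p 0 (y - (\<Sum>i\<in>{1..k}. of_int (a i) / (of_nat p) ^ i))" by (simp add: xs)
  moreover have "dig_below0 p (\<Sum>i\<in>{1..k}. of_int (a i) / (of_nat p) ^ i)"
    unfolding dig_below0_def using ka(1) by (intro exI[of _ k] exI[of _ a]) auto
  ultimately show ?thesis by blast
qed


lemma geo_sum:
  assumes "(q::rat) > 0"
  shows "(q - 1) * (\<Sum>i\<le>K. 1 / q ^ i) = q - 1 / q ^ K"
proof (induction K)
  case 0 then show ?case by simp
next
  case (Suc K)
  have "(q - 1) * (\<Sum>i\<le>Suc K. 1 / q ^ i) = (q - 1) * (\<Sum>i\<le>K. 1 / q ^ i) + (q - 1) / q ^ Suc K"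
    by (simp add: algebra_simps)
  also have "\<dots> = q - 1 / q ^ K + (q - 1) / q ^ Suc K" using Suc by simp
  also have "\<dots> = q - 1 / q ^ Suc K" using assms by (simp add: field_simps)
  finally show ?case .
qed

lemma sum_abs_bound0:
  assumes "prime p" "\<forall>i\<le>K. \<bar>c i\<bar> \<le> int p - 1"
  shows "(\<Sum>i\<le>K. \<bar>of_int (c i) / (of_nat p :: rat) ^ i\<bar>) \<le> of_nat p - 1 / (of_nat p) ^ K"
proof -
  have p0: "(of_nat p :: rat) > 0" using assms prime_gt_0_nat by simp
  have "(\<Sum>i\<le>K. \<bar>of_int (c i) / (of_nat p :: rat) ^ i\<bar>) \<le> (\<Sum>i\<le>K. (of_nat p - 1) * (1 / (of_nat p :: rat) ^ i))"
  proof (rule sum_mono)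
    fix i assume "i \<in> {..K}"
    then have "\<bar>c i\<bar> \<le> int p - 1" using assms by auto
    then have "(of_int \<bar>c i\<bar> :: rat) \<le> of_nat p - 1"
      by (metis of_int_diff of_int_le_iff of_int_of_nat_eq of_int_1)
    then show "\<bar>of_int (c i) / (of_nat p :: rat) ^ i\<bar> \<le> (of_nat p - 1) * (1 / (of_nat p :: rat) ^ i)"
      using p0 by (simp add: abs_div divide_right_mono)
  qed
  also have "\<dots> = (of_nat p - 1) * (\<Sum>i\<le>K. 1 / (of_nat p :: rat) ^ i)"
    by (simp add: sum_distrib_left)
  also have "\<dots> = of_nat p - 1 / (of_nat p) ^ K" by (rule geo_sum[OF p0])
  finally show ?thesis .
qed

lemma sum_abs_bound:
  assumes "prime p" "\<forall>i\<le>K. \<bar>c i\<bar> \<le> int p - 1"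
  shows "\<bar>\<Sum>i\<le>K. of_int (c i) / (of_nat p :: rat) ^ i\<bar> \<le> of_nat p - 1 / (of_nat p) ^ K"
  using sum_abs[of "\<lambda>i. of_int (c i) / (of_nat p :: rat) ^ i" "{..K}"] sum_abs_bound0[OF assms] by linarith

lemma sum_times_int:
  assumes "prime p"
  shows "(\<Sum>i\<le>K. of_int (c i) / (of_nat p :: rat) ^ i) * (of_nat p) ^ K \<in> \<int>"
proof -
  have p0: "(of_nat p :: rat) \<noteq> 0" using assms prime_gt_0_nat by simp
  have "(\<Sum>i\<le>K. of_int (c i) / (of_nat p :: rat) ^ i) * (of_nat p) ^ K
      = (\<Sum>i\<le>K. of_int (c i) / (of_nat p :: rat) ^ i * (of_nat p) ^ K)"
    by (simp add: sum_distrib_right)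
  also have "\<dots> \<in> \<int>"
  proof (rule Ints_sum)
    fix i assume "i \<in> {..K}"
    then have "(of_nat p :: rat) ^ K = of_nat p ^ i * of_nat p ^ (K - i)"
      by (simp add: power_add[symmetric])
    then have "of_int (c i) / (of_nat p :: rat) ^ i * (of_nat p) ^ K = of_int (c i * int p ^ (K - i))"
      using p0 by simp
    then show "of_int (c i) / (of_nat p :: rat) ^ i * (of_nat p) ^ K \<in> \<int>" by simp
  qed
  finally show ?thesis .
qed

lemma digit_zero:
  assumes "prime p" "\<forall>i\<le>K. \<bar>c i\<bar> \<le> int p - 1"
    and "(j = 1) \<or> (j = 0 \<and> c 0 = 0)"
    and "in_pZ p (int j) (\<Sum>i\<le>K. of_int (c i) / (of_nat p :: rat) ^ i)"
  shows "(\<Sum>i\<le>K. of_int (c i) / (of_nat p :: rat) ^ i) = 0"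
proof -
  define S where "S = (\<Sum>i\<le>K. of_int (c i) / (of_nat p :: rat) ^ i)"
  have p0: "(of_nat p :: rat) > 0" using assms prime_gt_0_nat by simp
  have p1: "(of_nat p :: rat) > 1" using assms prime_gt_1_nat by simp
  obtain C where C: "S * (of_nat p) ^ K = of_int C"
    using sum_times_int[OF assms(1), of c K] unfolding S_def by (auto elim: Ints_cases)
  have SC: "S = of_int C / (of_nat p) ^ K" using C p0 by (simp add: field_simps)
  have "int p ^ (K + j) dvd C" using inpZ_dvd[OF assms(1), of j C K] assms(4) SC S_def by simp
  then obtain z where z: "C = int p ^ (K + j) * z" by (rule dvdE)
  have Sz: "S = of_int z * (of_nat p) ^ j" using p0 by (simp add: SC z power_add)
  have pK: "1 / (of_nat p :: rat) ^ K > 0" using p0 by simp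
  have bound: "\<bar>S\<bar> < (of_nat p) ^ j"
  proof (cases "j = 1")
    case True
    have "\<bar>S\<bar> \<le> of_nat p - 1 / (of_nat p) ^ K" using sum_abs_bound[OF assms(1,2)] unfolding S_def .
    moreover have "(of_nat p :: rat) ^ j = of_nat p" using True by simp
    ultimately show ?thesis using pK by linarith
  next
    case False
    then have j0: "j = 0" "c 0 = 0" using assms(3) by auto
    define c' where "c' = c(0 := int p - 1)"
    have eqs: "{..K} = insert 0 {1..K}" by auto
    have "\<forall>i\<le>K. \<bar>c' i\<bar> \<le> int p - 1" using assms(2) p1 by (auto simp: c'_def)
    note b0 = sum_abs_bound0[OF assms(1) this]
    have e1: "(\<Sum>i\<le>K. \<bar>of_int (c' i) / (of_nat p :: rat) ^ i\<bar>) = (of_nat p - 1) + (\<Sum>i\<in>{1..K}. \<bar>of_int (c i) / (of_nat p :: rat) ^ i\<bar>)"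
      using p1 by (subst eqs) (simp add: c'_def)
    have e2: "(\<Sum>i\<le>K. \<bar>of_int (c i) / (of_nat p :: rat) ^ i\<bar>) = (\<Sum>i\<in>{1..K}. \<bar>of_int (c i) / (of_nat p :: rat) ^ i\<bar>)"
      by (subst eqs) (simp add: j0)
    have "\<bar>S\<bar> \<le> (\<Sum>i\<le>K. \<bar>of_int (c i) / (of_nat p :: rat) ^ i\<bar>)" unfolding S_def by (rule sum_abs)
    then have "\<bar>S\<bar> \<le> 1 - 1 / (of_nat p) ^ K" using b0 e1 e2 by linarith
    moreover have "(of_nat p :: rat) ^ j = 1" using j0 by simp
    ultimately show ?thesis using pK by linarith
  qed
  have "\<bar>of_int z\<bar> * (of_nat p :: rat) ^ j < 1 * (of_nat p) ^ j"
    using bound p0 by (simp add: Sz abs_mult)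
  then have "\<bar>of_int z :: rat\<bar> < 1" using p0 by (simp only: mult_less_cancel_right) simp
  then have "z = 0" by linarith
  then show ?thesis using Sz S_def by simp
qed


lemma sum_ext_filter:
  assumes "{i\<in>{..K}. P i} = A"
  shows "(\<Sum>i\<le>K. of_int (if P i then a i else 0) / (q::rat) ^ i) = (\<Sum>i\<in>A. of_int (a i) / q ^ i)"
proof -
  have "(\<Sum>i\<le>K. of_int (if P i then a i else 0) / (q::rat) ^ i) = (\<Sum>i\<le>K. if P i then of_int (a i) / q ^ i else 0)"
    by (rule sum.cong) auto
  also have "\<dots> = (\<Sum>i\<in>{i\<in>{..K}. P i}. of_int (a i) / q ^ i)"
    by (rule sum.inter_filter[symmetric]) simp
  finally show ?thesis using assms by simp
qed

lemma sum_diff_int: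
  "(\<Sum>i\<le>K. of_int (a i) / (q::rat) ^ i) - (\<Sum>i\<le>K. of_int (b i) / q ^ i) = (\<Sum>i\<le>K. of_int (a i - b i) / q ^ i)"
  by (simp add: sum_subtractf[symmetric] diff_divide_distrib)

lemma abs_diff_half:
  fixes u w P :: int
  assumes "2 * \<bar>u\<bar> \<le> P - 1" "2 * \<bar>w\<bar> \<le> P - 1"
  shows "\<bar>u - w\<bar> \<le> P - 1"
  using assms by arith

lemma s_unique:
  assumes "prime p" "dig_upto0 p x" "dig_upto0 p x'" "in_pZ p 1 (x - x')"
  shows "x = x'"
proof -
  obtain k a where ka: "\<forall>i\<le>k. 2 * \<bar>a i\<bar> \<le> int p - 1" "x = (\<Sum>i\<le>k. of_int (a i) / (of_nat p) ^ i)"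
    using assms(2) unfolding dig_upto0_def by blast
  obtain k' a' where ka': "\<forall>i\<le>k'. 2 * \<bar>a' i\<bar> \<le> int p - 1" "x' = (\<Sum>i\<le>k'. of_int (a' i) / (of_nat p) ^ i)"
    using assms(3) unfolding dig_upto0_def by blast
  define K where "K = max k k'"
  define c where "c i = (if i \<le> k then a i else 0) - (if i \<le> k' then a' i else 0)" for i
  have x: "x = (\<Sum>i\<le>K. of_int (if i \<le> k then a i else 0) / (of_nat p :: rat) ^ i)"
    by (subst sum_ext_filter[where A="{..k}"]) (auto simp: K_def ka(2))
  have x': "x' = (\<Sum>i\<le>K. of_int (if i \<le> k' then a' i else 0) / (of_nat p :: rat) ^ i)"
    by (subst sum_ext_filter[where A="{..k'}"]) (auto simp: K_def ka'(2))
  have xx: "x - x' = (\<Sum>i\<le>K. of_int (c i) / (of_nat p :: rat) ^ i)"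
    unfolding x x' sum_diff_int c_def ..
  have cb: "\<forall>i\<le>K. \<bar>c i\<bar> \<le> int p - 1"
  proof (intro allI impI)
    fix i assume "i \<le> K"
    have p1: "int p \<ge> 2" using prime_gt_1_nat[OF assms(1)] by simp
    have u: "2 * \<bar>(if i \<le> k then a i else 0)\<bar> \<le> int p - 1" using ka(1) p1 by auto
    have w: "2 * \<bar>(if i \<le> k' then a' i else 0)\<bar> \<le> int p - 1" using ka'(1) p1 by auto
    show "\<bar>c i\<bar> \<le> int p - 1" unfolding c_def by (rule abs_diff_half[OF u w])
  qed
  have "in_pZ p (int 1) (\<Sum>i\<le>K. of_int (c i) / (of_nat p :: rat) ^ i)" using assms(4) xx by simp
  from digit_zero[OF assms(1) cb _ this] have "x - x' = 0" using xx by simp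
  then show ?thesis by simp
qed

lemma t_unique:
  assumes "prime p" "dig_below0 p x" "dig_below0 p x'" "in_pZ p 0 (x - x')"
  shows "x = x'"
proof -
  obtain k a where ka: "\<forall>i\<in>{1..k}. 2 * \<bar>a i\<bar> \<le> int p - 1" "x = (\<Sum>i\<in>{1..k}. of_int (a i) / (of_nat p) ^ i)"
    using assms(2) unfolding dig_below0_def by blast
  obtain k' a' where ka': "\<forall>i\<in>{1..k'}. 2 * \<bar>a' i\<bar> \<le> int p - 1" "x' = (\<Sum>i\<in>{1..k'}. of_int (a' i) / (of_nat p) ^ i)"
    using assms(3) unfolding dig_below0_def by blast
  define K where "K = max k k'"
  define c where "c i = (if 1 \<le> i \<and> i \<le> k then a i else 0) - (if 1 \<le> i \<and> i \<le> k' then a' i else 0)" for i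
  have x: "x = (\<Sum>i\<le>K. of_int (if 1 \<le> i \<and> i \<le> k then a i else 0) / (of_nat p :: rat) ^ i)"
    by (subst sum_ext_filter[where A="{1..k}"]) (auto simp: K_def ka(2))
  have x': "x' = (\<Sum>i\<le>K. of_int (if 1 \<le> i \<and> i \<le> k' then a' i else 0) / (of_nat p :: rat) ^ i)"
    by (subst sum_ext_filter[where A="{1..k'}"]) (auto simp: K_def ka'(2))
  have xx: "x - x' = (\<Sum>i\<le>K. of_int (c i) / (of_nat p :: rat) ^ i)"
    unfolding x x' sum_diff_int c_def ..
  have cb: "\<forall>i\<le>K. \<bar>c i\<bar> \<le> int p - 1"
  proof (intro allI impI)
    fix i assume "i \<le> K"
    have p1: "int p \<ge> 2" using prime_gt_1_nat[OF assms(1)] by simp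
    have u: "2 * \<bar>(if 1 \<le> i \<and> i \<le> k then a i else 0)\<bar> \<le> int p - 1" using ka(1) p1 by auto
    have w: "2 * \<bar>(if 1 \<le> i \<and> i \<le> k' then a' i else 0)\<bar> \<le> int p - 1" using ka'(1) p1 by auto
    show "\<bar>c i\<bar> \<le> int p - 1" unfolding c_def by (rule abs_diff_half[OF u w])
  qed
  have c0: "c 0 = 0" by (simp add: c_def)
  have "in_pZ p (int 0) (\<Sum>i\<le>K. of_int (c i) / (of_nat p :: rat) ^ i)" using assms(4) xx by simp
  from digit_zero[OF assms(1) cb _ this] c0 have "x - x' = 0" using xx by simp
  then show ?thesis by simp
qed


lemma inpZ_div:
  assumes "prime p" "in_pZ p (int (m + v)) z" "\<not> int p dvd u" "u \<noteq> 0"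
  shows "in_pZ p (int m) (z / of_int (int p ^ v * u))"
proof -
  obtain a b where ab: "b \<noteq> 0" "\<not> int p dvd b" "z = of_int a / of_int b * (of_nat p) ^ (m + v)"
    using assms(2) by (rule inpZ_E)
  have pr: "prime (int p)" using assms(1) by simp
  have p0: "(of_nat p :: rat) \<noteq> 0" using assms prime_gt_0_nat by simp
  show ?thesis
  proof (rule inpZ_I[of "b * u" _ _ a])
    show "b * u \<noteq> 0" using ab assms by simp
    show "\<not> int p dvd b * u" using ab assms pr by (simp add: prime_dvd_mult_iff)
    show "z / of_int (int p ^ v * u) = of_int a / of_int (b * u) * of_nat p ^ m"
      using ab assms p0 by (simp add: field_simps power_add)
  qed
qed

lemma sqrt_tail:
  assumes "prime p" "is_padic_sqrt_seq p D r" "m0 \<le> n"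
  shows "in_pZ p (int m0) (r n - r m0)"
  using assms(3)
proof (induction n rule: dec_induct)
  case base then show ?case using inpZ_0[OF assms(1)] by simp
next
  case (step n)
  have "in_pZ p (int n) (r (Suc n) - r n)" using assms(2) unfolding is_padic_sqrt_seq_def by blast
  then have "in_pZ p (int m0) (r (Suc n) - r n)" using step(1) by (rule inpZ_mono)
  from inpZ_add[OF assms(1) this step(3)] show ?case by simp
qed

lemma cong_base:
  assumes "prime p" "is_padic_sqrt_seq p D r" "q \<noteq> 0"
  shows "\<exists>m0. \<forall>n\<ge>m0. in_pZ p 1 ((P' + r n) / of_int q - (P' + r m0) / of_int q)"
proof -
  obtain v u where vu: "q = int p ^ v * u" "\<not> int p dvd u" "u \<noteq> 0" using pfactor[OF assms(1,3)] by blast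
  have "in_pZ p 1 ((P' + r n) / of_int q - (P' + r (Suc v)) / of_int q)" if "n \<ge> Suc v" for n
  proof -
    have "in_pZ p (int (1 + v)) (r n - r (Suc v))" using sqrt_tail[OF assms(1,2) that] by simp
    from inpZ_div[OF assms(1) this vu(2,3)]
    have "in_pZ p (int 1) ((r n - r (Suc v)) / of_int q)" using vu(1) by simp
    moreover have "(P' + r n) / of_int q - (P' + r (Suc v)) / of_int q = (r n - r (Suc v)) / of_int q"
      by (simp add: add_divide_distrib diff_divide_distrib)
    ultimately show ?thesis by simp
  qed
  then show ?thesis by blast
qed

lemma cong_diff:
  assumes "prime p" "padic_cong p r P' Q' x (int j)" "padic_cong p r P' Q' x' (int j)"
  shows "in_pZ p (int j) (x' - x)"
proof -
  obtain n1 where n1: "\<forall>n\<ge>n1. in_pZ p (int j) ((P' + r n) / Q' - x)" using assms(2) unfolding padic_cong_def by blast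
  obtain n2 where n2: "\<forall>n\<ge>n2. in_pZ p (int j) ((P' + r n) / Q' - x')" using assms(3) unfolding padic_cong_def by blast
  have "in_pZ p (int j) (((P' + r (max n1 n2)) / Q' - x) - ((P' + r (max n1 n2)) / Q' - x'))"
    by (rule inpZ_diff[OF assms(1)]) (use n1 n2 in auto)
  then show ?thesis by simp
qed

lemma s_fun_prop:
  assumes "prime p" "odd p" "is_padic_sqrt_seq p D r" "q \<noteq> 0"
  shows "dig_upto0 p (s_fun p r P' (of_int q)) \<and> padic_cong p r P' (of_int q) (s_fun p r P' (of_int q)) 1"
proof -
  obtain m0 where m0: "\<forall>n\<ge>m0. in_pZ p 1 ((P' + r n) / of_int q - (P' + r m0) / of_int q)"
    using cong_base[OF assms(1,3,4)] by blast
  obtain x where x: "dig_upto0 p x" "in_pZ p 1 ((P' + r m0) / of_int q - x)" using s_exists[OF assms(1,2)] by blast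
  have "padic_cong p r P' (of_int q) x 1"
    unfolding padic_cong_def
  proof (intro exI[of _ m0] allI impI)
    fix n assume "m0 \<le> n"
    then have "in_pZ p (int 1) ((P' + r n) / of_int q - (P' + r m0) / of_int q)" using m0 by simp
    moreover have "in_pZ p (int 1) ((P' + r m0) / of_int q - x)" using x(2) by simp
    ultimately have "in_pZ p (int 1) (((P' + r n) / of_int q - (P' + r m0) / of_int q) + ((P' + r m0) / of_int q - x))" by (rule inpZ_add[OF assms(1)])
    then show "in_pZ p 1 ((P' + r n) / of_int q - x)" by simp
  qed
  moreover have "y = x" if "dig_upto0 p y \<and> padic_cong p r P' (of_int q) y 1" for y
  proof -
    have "in_pZ p (int 1) (y - x)" using cong_diff[OF assms(1), of r P' "of_int q" x 1 y] that \<open>padic_cong p r P' (of_int q) x 1\<close> by simp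
    then show ?thesis using s_unique[OF assms(1)] that x(1) by simp
  qed
  ultimately have "\<exists>!y. dig_upto0 p y \<and> padic_cong p r P' (of_int q) y 1" using x(1) by blast
  from theI'[OF this] show ?thesis unfolding s_fun_def .
qed

lemma t_fun_prop:
  assumes "prime p" "odd p" "is_padic_sqrt_seq p D r" "q \<noteq> 0"
  shows "dig_below0 p (t_fun p r P' (of_int q)) \<and> padic_cong p r P' (of_int q) (t_fun p r P' (of_int q)) 0"
proof -
  obtain m0 where m0: "\<forall>n\<ge>m0. in_pZ p 1 ((P' + r n) / of_int q - (P' + r m0) / of_int q)"
    using cong_base[OF assms(1,3,4)] by blast
  obtain x where x: "dig_below0 p x" "in_pZ p 0 ((P' + r m0) / of_int q - x)" using t_exists[OF assms(1,2)] by blast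
  have "padic_cong p r P' (of_int q) x 0"
    unfolding padic_cong_def
  proof (intro exI[of _ m0] allI impI)
    fix n assume "m0 \<le> n"
    then have "in_pZ p (int 1) ((P' + r n) / of_int q - (P' + r m0) / of_int q)" using m0 by simp
    then have "in_pZ p (int 0) ((P' + r n) / of_int q - (P' + r m0) / of_int q)" by (rule inpZ_mono) simp
    moreover have "in_pZ p (int 0) ((P' + r m0) / of_int q - x)" using x(2) by simp
    ultimately have "in_pZ p (int 0) (((P' + r n) / of_int q - (P' + r m0) / of_int q) + ((P' + r m0) / of_int q - x))" by (rule inpZ_add[OF assms(1)])
    then show "in_pZ p 0 ((P' + r n) / of_int q - x)" by simp
  qed
  moreover have "y = x" if "dig_below0 p y \<and> padic_cong p r P' (of_int q) y 0" for y
  proof -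
    have "in_pZ p (int 0) (y - x)" using cong_diff[OF assms(1), of r P' "of_int q" x 0 y] that \<open>padic_cong p r P' (of_int q) x 0\<close> by simp
    then show ?thesis using t_unique[OF assms(1)] that x(1) by simp
  qed
  ultimately have "\<exists>!y. dig_below0 p y \<and> padic_cong p r P' (of_int q) y 0" using x(1) by blast
  from theI'[OF this] show ?thesis unfolding t_fun_def .
qed


lemma sq_int:
  assumes "prime p" "in_pZ p 0 (q^2)"
  shows "in_pZ p 0 q"
proof -
  obtain e w where ew: "quotient_of q = (e, w)" by (cases "quotient_of q") auto
  have q: "q = of_int e / of_int w" and w: "w > 0" and cop: "coprime e w"
    using ew quotient_of_div quotient_of_denom_pos quotient_of_coprime by auto
  have "in_pZ p (int 0) (q^2)" using assms(2) by simp
  then obtain a b where ab: "b \<noteq> 0" "\<not> int p dvd b" "q^2 = of_int a / of_int b * (of_nat p) ^ 0"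
    by (rule inpZ_E)
  have pr: "prime (int p)" using assms(1) by simp
  have "(of_int e)^2 / (of_int w)^2 = (of_int a / of_int b :: rat)"
    using ab(3) by (simp only: q power_divide power_0 mult_1_right)
  then have "(of_int e)^2 * of_int b = (of_int a * (of_int w)^2 :: rat)"
    by (subst (asm) frac_eq_eq) (use ab(1) w in auto)
  then have "(of_int (e^2 * b) :: rat) = of_int (a * w^2)" by simp
  then have eq: "e^2 * b = a * w^2" by (simp only: of_int_eq_iff)
  have "\<not> int p dvd w"
  proof
    assume pw: "int p dvd w"
    then have "int p dvd a * w^2" by (simp add: power2_eq_square)
    then have "int p dvd e^2 * b" using eq by simp
    then have "int p dvd e^2" using pr ab(2) prime_dvd_mult_iff by blast
    then have "int p dvd e" using pr prime_dvd_power by blast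
    with pw cop have "is_unit (int p)" using coprime_common_divisor by blast
    then show False using pr not_prime_unit by blast
  qed
  then show ?thesis using inpZ_I[of w p q e 0] w q by simp
qed
lemma int_of:
  assumes "prime p" "in_pZ p 0 x" "x * (of_nat p) ^ k \<in> \<int>"
  shows "x \<in> \<int>"
proof -
  obtain C where C: "x * (of_nat p) ^ k = of_int C" using assms(3) by (metis Ints_cases)
  have p0: "(of_nat p :: rat) \<noteq> 0" using assms prime_gt_0_nat by simp
  have xC: "x = of_int C / (of_nat p) ^ k" using C p0 by (simp add: field_simps)
  have "int p ^ (k + 0) dvd C" using inpZ_dvd[OF assms(1), of 0 C k] assms(2) xC by simp
  then obtain z where "C = int p ^ k * z" by auto
  then have "x = of_int z" using xC p0 by simp
  then show ?thesis by simp
qed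

lemma cong_shift:
  assumes "prime p" "padic_cong p r P' Q' x (int j)" "z \<in> \<int>"
  shows "padic_cong p r P' Q' (z + x) 0"
proof -
  obtain n0 where n0: "\<forall>n\<ge>n0. in_pZ p (int j) ((P' + r n) / Q' - x)" using assms(2) unfolding padic_cong_def by blast
  obtain zi where zi: "z = of_int zi" using assms(3) by (metis Ints_cases)
  show ?thesis unfolding padic_cong_def
  proof (intro exI[of _ n0] allI impI)
    fix n assume "n0 \<le> n"
    then have "in_pZ p (int j) ((P' + r n) / Q' - x)" using n0 by blast
    then have "in_pZ p (int 0) ((P' + r n) / Q' - x)" by (rule inpZ_mono) simp
    moreover have "in_pZ p (int 0) (of_int zi)" using inpZ_int[OF assms(1)] by simp
    ultimately have "in_pZ p (int 0) ((P' + r n) / Q' - x - of_int zi)" by (rule inpZ_diff[OF assms(1)])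
    then show "in_pZ p 0 ((P' + r n) / Q' - (z + x))" by (simp add: zi algebra_simps)
  qed
qed

lemma b_prop:
  assumes "prime p" "odd p" "is_padic_sqrt_seq p D r" "q \<noteq> 0"
    and "bb = (if c then sbar p r P' (of_int q) else tbar p r P' (of_int q))"
  shows "(\<exists>k. bb * (of_nat p) ^ k \<in> \<int>) \<and> padic_cong p r P' (of_int q) bb 0"
proof (cases c)
  case True
  define s where "s = s_fun p r P' (of_int q)"
  have sp0: "dig_upto0 p s \<and> padic_cong p r P' (of_int q) s 1" unfolding s_def by (rule s_fun_prop[OF assms(1-4)])
  have sp: "dig_upto0 p s" "padic_cong p r P' (of_int q) s (int 1)" using sp0 by simp_all
  define z where "z = (of_int (round ((P' / of_int q - s) / of_nat p)) * of_nat p :: rat)"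
  have bb: "bb = z + s" using True assms(5) unfolding sbar_def s_def z_def Let_def by (simp only: if_True)
  have zI: "z \<in> \<int>" unfolding z_def by simp
  obtain k a where ka: "s = (\<Sum>i\<le>k. of_int (a i) / (of_nat p) ^ i)" using sp(1) unfolding dig_upto0_def by blast
  have "s * (of_nat p) ^ k \<in> \<int>" unfolding ka by (rule sum_times_int[OF assms(1)])
  moreover have "z * (of_nat p) ^ k \<in> \<int>" by (intro Ints_mult zI Ints_power Ints_of_nat)
  ultimately have "bb * (of_nat p) ^ k \<in> \<int>" unfolding bb distrib_right by (intro Ints_add)
  moreover have "padic_cong p r P' (of_int q) bb 0" unfolding bb by (rule cong_shift[OF assms(1) sp(2) zI])
  ultimately show ?thesis by blast
next
  case False
  define t where "t = t_fun p r P' (of_int q)"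
  have tp0: "dig_below0 p t \<and> padic_cong p r P' (of_int q) t 0" unfolding t_def by (rule t_fun_prop[OF assms(1-4)])
  have tp: "dig_below0 p t" "padic_cong p r P' (of_int q) t (int 0)" using tp0 by simp_all
  define z where "z = (of_int (round (P' / of_int q - t)) :: rat)"
  have bb: "bb = z + t" using False assms(5) unfolding tbar_def t_def z_def Let_def by (simp only: if_False)
  have zI: "z \<in> \<int>" unfolding z_def by simp
  obtain k a where ka: "t = (\<Sum>i\<in>{1..k}. of_int (a i) / (of_nat p) ^ i)" using tp(1) unfolding dig_below0_def by blast
  have tt: "t = (\<Sum>i\<le>k. of_int (if 1 \<le> i \<and> i \<le> k then a i else 0) / (of_nat p :: rat) ^ i)"
    by (subst sum_ext_filter[where A="{1..k}"]) (auto simp: ka)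
  have "t * (of_nat p) ^ k \<in> \<int>" unfolding tt by (rule sum_times_int[OF assms(1)])
  moreover have "z * (of_nat p) ^ k \<in> \<int>" by (intro Ints_mult zI Ints_power Ints_of_nat)
  ultimately have "bb * (of_nat p) ^ k \<in> \<int>" unfolding bb distrib_right by (intro Ints_add)
  moreover have "padic_cong p r P' (of_int q) bb 0" unfolding bb by (rule cong_shift[OF assms(1) tp(2) zI])
  ultimately show ?thesis by blast
qed


lemma r_int:
  assumes "prime p" "is_padic_sqrt_seq p D r"
  shows "in_pZ p (int 0) (r n)"
proof -
  have "in_pZ p (int n) ((r n)^2 - of_int D)" using assms(2) unfolding is_padic_sqrt_seq_def by blast
  then have "in_pZ p (int 0) ((r n)^2 - of_int D)" by (rule inpZ_mono) simp
  moreover have "in_pZ p (int 0) (of_int D)" using inpZ_int[OF assms(1)] by simp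
  ultimately have "in_pZ p (int 0) (((r n)^2 - of_int D) + of_int D)" by (rule inpZ_add[OF assms(1)])
  then have "in_pZ p 0 ((r n)^2)" by simp
  from sq_int[OF assms(1) this] show ?thesis by simp
qed

lemma step_int:
  assumes "prime p" "odd p" "is_padic_sqrt_seq p D r" "\<not> (\<exists>k::int. D = k^2)"
    and "Qi \<noteq> 0" "Qi dvd D - Pi^2"
    and "bb = (if c then sbar p r (of_int Pi) (of_int Qi) else tbar p r (of_int Pi) (of_int Qi))"
  shows "\<exists>P2 Q2. bb * of_int Qi - of_int Pi = of_int P2 \<and>
     (of_int D - (of_int P2)^2) / (of_int Qi :: rat) = of_int Q2 \<and> Q2 \<noteq> 0 \<and> Q2 dvd D - P2^2"
proof -
  have Q0: "(of_int Qi :: rat) \<noteq> 0" using assms(5) by simp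
  obtain k where bk: "bb * (of_nat p) ^ k \<in> \<int>" and cong: "padic_cong p r (of_int Pi) (of_int Qi) bb 0"
    using b_prop[OF assms(1-3,5,7)] by blast
  obtain n0 where n0: "\<forall>n\<ge>n0. in_pZ p 0 ((of_int Pi + r n) / of_int Qi - bb)"
    using cong unfolding padic_cong_def by blast
  obtain v u where vu: "Qi = int p ^ v * u" "\<not> int p dvd u" "u \<noteq> 0" using pfactor[OF assms(1,5)] by blast
  define n where "n = max n0 v"
  define e where "e = (of_int Pi + r n) / of_int Qi - bb"
  have e0: "in_pZ p (int 0) e" using n0 unfolding e_def n_def by simp
  have rn: "in_pZ p (int 0) (r n)" by (rule r_int[OF assms(1,3)])
  have Qr: "in_pZ p (int 0) (of_int Qi)" and Pr: "in_pZ p (int 0) (of_int Pi)" using inpZ_int[OF assms(1)] by simp_all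
  have eQ: "e * of_int Qi = of_int Pi + r n - bb * of_int Qi" using Q0 unfolding e_def by (simp add: field_simps)
  have "in_pZ p (int (0 + 0)) (e * of_int Qi)" by (rule inpZ_mult[OF assms(1) e0 Qr])
  then have "in_pZ p (int 0) (e * of_int Qi)" by simp
  moreover have "in_pZ p (int 0) (of_int Pi + r n)" by (rule inpZ_add[OF assms(1) Pr rn])
  ultimately have "in_pZ p (int 0) ((of_int Pi + r n) - e * of_int Qi)" by (intro inpZ_diff[OF assms(1)])
  then have bQr: "in_pZ p 0 (bb * of_int Qi)" using eQ by simp
  have "bb * of_int Qi * (of_nat p) ^ k = (bb * (of_nat p) ^ k) * of_int Qi" by simp
  also have "\<dots> \<in> \<int>" by (rule Ints_mult[OF bk]) simp
  finally have "bb * of_int Qi \<in> \<int>" by (rule int_of[OF assms(1) bQr])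
  then have "bb * of_int Qi - of_int Pi \<in> \<int>" by (intro Ints_diff) auto
  then obtain P2 where P2: "bb * of_int Qi - of_int Pi = of_int P2" by (metis Ints_cases)
  obtain d where d: "D - Pi^2 = Qi * d" using assms(6) by (auto elim: dvdE)
  obtain B where B: "bb * (of_nat p) ^ k = of_int B" using bk by (metis Ints_cases)
  define Q2' where "Q2' = (of_int D - (of_int P2)^2) / (of_int Qi :: rat)"
  have id1: "Q2' = of_int d + bb * (2 * of_int Pi - bb * of_int Qi)"
  proof -
    have DD: "(of_int D :: rat) = of_int Pi ^ 2 + of_int Qi * of_int d"
      using arg_cong[OF d, of "of_int :: int \<Rightarrow> rat"] by simp
    have P2e: "of_int P2 = bb * of_int Qi - of_int Pi" using P2 by simp
    show ?thesis unfolding Q2'_def P2e DD using Q0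
      by (simp add: field_simps power2_eq_square)
  qed
  have "Q2' * (of_nat p) ^ (2 * k) = of_int d * (of_nat p) ^ (2 * k)
      + (bb * (of_nat p) ^ k) * (2 * of_int Pi * (of_nat p) ^ k - (bb * (of_nat p) ^ k) * of_int Qi)"
    unfolding id1 by (simp add: power_mult algebra_simps power2_eq_square)
  also have "\<dots> \<in> \<int>" unfolding B by (intro Ints_add Ints_mult Ints_diff) auto
  finally have Q2I: "Q2' * (of_nat p) ^ (2 * k) \<in> \<int>" .
  have id2: "Q2' = (of_int D - (r n)^2) / of_int Qi + e * (r n + of_int P2)"
  proof -
    have "e * of_int Qi = r n - of_int P2" using eQ P2 by simp
    then have rne: "r n = of_int P2 + e * of_int Qi" by simp
    show ?thesis unfolding Q2'_def rne using Q0 by (simp add: field_simps power2_eq_square)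
  qed
  have "in_pZ p (int n) ((r n)^2 - of_int D)" using assms(3) unfolding is_padic_sqrt_seq_def by blast
  then have "in_pZ p (int n) (- ((r n)^2 - of_int D))" by (rule inpZ_neg)
  moreover have "n = (n - v) + v" unfolding n_def by simp
  ultimately have "in_pZ p (int ((n - v) + v)) (- ((r n)^2 - of_int D))" by simp
  from inpZ_div[OF assms(1) this vu(2,3)]
  have "in_pZ p (int (n - v)) ((of_int D - (r n)^2) / of_int Qi)" using vu(1) by simp
  then have t1: "in_pZ p (int 0) ((of_int D - (r n)^2) / of_int Qi)" by (rule inpZ_mono) simp
  have "in_pZ p (int 0) (of_int P2)" using inpZ_int[OF assms(1)] by simp
  then have "in_pZ p (int 0) (r n + of_int P2)" by (rule inpZ_add[OF assms(1) rn])
  from inpZ_mult[OF assms(1) e0 this] have t2: "in_pZ p (int 0) (e * (r n + of_int P2))" by simp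
  have "in_pZ p (int 0) Q2'" unfolding id2 by (rule inpZ_add[OF assms(1) t1 t2])
  then have "Q2' \<in> \<int>" using int_of[OF assms(1) _ Q2I] by simp
  then obtain Q2 where Q2: "Q2' = of_int Q2" by (metis Ints_cases)
  have DQ: "(of_int D - (of_int P2)^2 :: rat) = of_int Qi * of_int Q2"
    using Q2 Q0 unfolding Q2'_def by (simp add: field_simps)
  then have DQi: "D - P2^2 = Qi * Q2" by (metis of_int_diff of_int_eq_iff of_int_mult of_int_power)
  have "Q2 \<noteq> 0"
  proof
    assume "Q2 = 0"
    then have "D = P2^2" using DQi by simp
    then show False using assms(4) by blast
  qed
  moreover have "Q2 dvd D - P2^2" using DQi by simp
  ultimately show ?thesis using P2 Q2 unfolding Q2'_def by blast
qed


lemma chord: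
  fixes x X d c :: rat
  assumes "1 \<le> x" "x \<le> X" "0 \<le> d" "0 \<le> c"
  shows "d / x + c * x \<le> max (d + c) (d / X + c * X)"
proof -
  have x0: "x > 0" and X0: "X > 0" using assms by auto
  have "(x - 1) * (X - x) \<ge> 0" using assms by simp
  then have "X \<le> x * (1 + X - x)" by (simp add: algebra_simps)
  then have "1 / x \<le> (1 + X - x) / X" using x0 X0 by (simp add: field_simps)
  then have h: "d / x \<le> d * (1 + X - x) / X" using assms(3)
    by (metis mult_left_mono times_divide_eq_right mult.right_neutral)
  define L where "L = c * x + d * (1 + X - x) / X"
  have L1: "L - (d + c) = (x - 1) * (c - d / X)" unfolding L_def using X0 by (simp add: field_simps)
  have L2: "(d / X + c * X) - (d + c) = (X - 1) * (c - d / X)" using X0 by (simp add: field_simps)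
  have "L \<le> max (d + c) (d / X + c * X)"
  proof (cases "c - d / X \<ge> 0")
    case True
    have "(x - 1) * (c - d / X) \<le> (X - 1) * (c - d / X)" using True assms by (intro mult_right_mono) auto
    then show ?thesis using L1 L2 by simp
  next
    case False
    have "(x - 1) * (c - d / X) \<le> 0" using False assms by (intro mult_nonneg_nonpos) auto
    then show ?thesis using L1 by simp
  qed
  moreover have "d / x + c * x \<le> L" unfolding L_def using h by simp
  ultimately show ?thesis by linarith
qed

lemma step_real:
  fixes bb P Q c :: rat and D :: int
  assumes "\<bar>bb - P / Q\<bar> \<le> c" "Q \<noteq> 0"
  shows "\<bar>(of_int D - (bb * Q - P)^2) / Q\<bar> \<le> of_int \<bar>D\<bar> / \<bar>Q\<bar> + c^2 * \<bar>Q\<bar>"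
proof -
  have e: "bb * Q - P = (bb - P / Q) * Q" using assms(2) by (simp add: field_simps)
  have "\<bar>bb * Q - P\<bar> \<le> c * \<bar>Q\<bar>" unfolding e abs_mult using assms(1) by (intro mult_right_mono) auto
  then have sq: "(bb * Q - P)^2 \<le> (c * \<bar>Q\<bar>)^2"
    by (metis abs_ge_zero abs_le_square_iff abs_of_nonneg order_trans power2_abs)
  have "\<bar>of_int D - (bb * Q - P)^2\<bar> \<le> of_int \<bar>D\<bar> + (bb * Q - P)^2"
    by (simp add: abs_triangle_ineq4[THEN order_trans])
  also have "\<dots> \<le> of_int \<bar>D\<bar> + c^2 * \<bar>Q\<bar>^2" using sq by (simp add: power_mult_distrib)
  finally have h: "\<bar>of_int D - (bb * Q - P)^2\<bar> \<le> of_int \<bar>D\<bar> + c^2 * \<bar>Q\<bar>^2" .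
  have Qp: "\<bar>Q\<bar> > 0" using assms(2) by simp
  have "\<bar>(of_int D - (bb * Q - P)^2) / Q\<bar> = \<bar>of_int D - (bb * Q - P)^2\<bar> / \<bar>Q\<bar>" by (simp add: abs_divide)
  also have "\<dots> \<le> (of_int \<bar>D\<bar> + c^2 * \<bar>Q\<bar>^2) / \<bar>Q\<bar>" using h Qp by (intro divide_right_mono) auto
  also have "\<dots> = of_int \<bar>D\<bar> / \<bar>Q\<bar> + c^2 * \<bar>Q\<bar>" using Qp by (simp add: field_simps power2_eq_square)
  finally show ?thesis .
qed

lemma sbar_close:
  assumes "p > 0"
  shows "\<bar>sbar p r P' Q' - P' / Q'\<bar> \<le> of_nat p / 2"
proof -
  define s where "s = s_fun p r P' Q'"
  define z where "z = (P' / Q' - s) / of_nat p"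
  have p0: "(of_nat p :: rat) > 0" using assms by simp
  have "sbar p r P' Q' - P' / Q' = of_nat p * (of_int (round z) - z)"
    unfolding sbar_def Let_def s_def[symmetric] z_def using p0 by (simp add: field_simps)
  then have "\<bar>sbar p r P' Q' - P' / Q'\<bar> = of_nat p * \<bar>of_int (round z) - z\<bar>" by (simp add: abs_mult)
  also have "\<dots> \<le> of_nat p * (1/2)" using of_int_round_abs_le[of z] p0 by (intro mult_left_mono) auto
  finally show ?thesis by simp
qed

lemma tbar_close:
  shows "\<bar>tbar p r P' Q' - P' / Q'\<bar> \<le> 1 / 2"
proof -
  define t where "t = t_fun p r P' Q'"
  define z where "z = P' / Q' - t"
  have "tbar p r P' Q' - P' / Q' = of_int (round z) - z"
    unfolding tbar_def Let_def t_def[symmetric] z_def by simp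
  then show ?thesis using of_int_round_abs_le[of z] by simp
qed


lemma N_facts:
  assumes "prime p" "p \<ge> 5" "N = nat \<lceil>log 2 (real p)\<rceil>"
  shows "p + 1 \<le> 2 ^ N" "2 \<le> N"
proof -
  have lp: "log 2 (real p) > 0" using assms(2) by simp
  have "log 2 (real p) \<le> real N" using assms(3) lp by linarith
  then have "2 powr (log 2 (real p)) \<le> 2 powr real N" by (intro powr_mono) auto
  moreover have "2 powr (log 2 (real p)) = real p" using assms(2) by (intro powr_log_cancel) auto
  ultimately have "real p \<le> 2 powr real N" by simp
  then have "real p \<le> real (2 ^ N)" by (simp add: powr_realpow)
  then have le: "p \<le> 2 ^ N" by linarith
  have "odd p" using assms(1,2) prime_odd_nat by simp
  then have "p \<noteq> 2 ^ N" using assms(2) by (cases N) auto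
  with le show pN: "p + 1 \<le> 2 ^ N" by simp
  show "2 \<le> N"
  proof (rule ccontr)
    assume "\<not> 2 \<le> N"
    then have "N \<le> 1" by simp
    then have "(2::nat) ^ N \<le> 2 ^ 1" by (intro power_increasing) auto
    then show False using pN assms(2) by simp
  qed
qed

theorem lemma6:
  fixes p :: nat and P Q D :: int and r :: "nat \<Rightarrow> rat"
    and Pn Qn b :: "nat \<Rightarrow> rat" and N :: nat
  assumes "prime p" and "p \<ge> 5"
    and "Q \<noteq> 0"
    and "\<not> (\<exists>k::int. D = k^2)"
    and "is_padic_sqrt_seq p D r"
    and "Q dvd D - P^2"
    and "N = nat \<lceil>log 2 (real p)\<rceil>"
    and "Pn 0 = of_int P" and "Qn 0 = of_int Q"
    and "\<And>n. b n = (if N dvd n then sbar p r (Pn n) (Qn n) else tbar p r (Pn n) (Qn n))"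
    and "\<And>n. Pn (Suc n) = b n * Qn n - Pn n"
    and "\<And>n. Qn (Suc n) = (of_int D - (Pn (Suc n))^2) / Qn n"
    and "\<And>n. b n \<noteq> 0"
  shows "\<forall>n. \<bar>Qn n\<bar> \<le> (of_nat p)^2 / 4 *
            max (of_int \<bar>Q\<bar>) (max ((of_nat p)^2 / 4 * of_int \<bar>D\<bar> + 1)
                                  (4 * ((of_nat p)^2 + 1) / 3)) + 1"
proof -
  have oddp: "odd p" using assms(1,2) prime_odd_nat by simp
  have NF: "p + 1 \<le> 2 ^ N" "2 \<le> N" using N_facts[OF assms(1,2,7)] by auto
  have INT: "\<exists>Pi Qi. Pn n = of_int Pi \<and> Qn n = of_int Qi \<and> Qi \<noteq> 0 \<and> Qi dvd D - Pi^2" for n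
  proof (induction n)
    case 0 then show ?case using assms(3,6,8,9) by blast
  next
    case (Suc n)
    then obtain Pi Qi where I: "Pn n = of_int Pi" "Qn n = of_int Qi" "Qi \<noteq> 0" "Qi dvd D - Pi^2" by blast
    have bn: "b n = (if N dvd n then sbar p r (of_int Pi) (of_int Qi) else tbar p r (of_int Pi) (of_int Qi))"
      using assms(10)[of n] I by simp
    obtain P2 Q2 where S: "b n * of_int Qi - of_int Pi = of_int P2"
      "(of_int D - (of_int P2)^2) / (of_int Qi :: rat) = of_int Q2" "Q2 \<noteq> 0" "Q2 dvd D - P2^2"
      using step_int[OF assms(1) oddp assms(5,4) I(3,4) bn] by blast
    have "Pn (Suc n) = of_int P2" using assms(11)[of n] I S(1) by simp
    moreover have "Qn (Suc n) = of_int Q2" using assms(12)[of n] I S(2) \<open>Pn (Suc n) = of_int P2\<close> by simp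
    ultimately show ?case using S(3,4) by blast
  qed
  have Q1: "\<bar>Qn n\<bar> \<ge> 1" for n
  proof -
    obtain Pi Qi where I: "Qn n = of_int Qi" "Qi \<noteq> 0" using INT[of n] by blast
    then have "\<bar>Qi\<bar> \<ge> 1" by simp
    then have "(of_int \<bar>Qi\<bar> :: rat) \<ge> 1" by (metis of_int_1 of_int_le_iff)
    then show ?thesis using I by simp
  qed
  define pp where "pp = (of_nat p :: rat)"
  define d where "d = (of_int \<bar>D\<bar> :: rat)"
  define M where "M = max (of_int \<bar>Q\<bar>) (max (pp^2/4*d + 1) (4*(pp^2+1)/3))"
  have pp5: "pp \<ge> 5" unfolding pp_def using assms(2) by (metis of_nat_le_iff of_nat_numeral)
  have d0: "d \<ge> 0" unfolding d_def by simp
  have M1: "M \<ge> pp^2/4*d + 1" and M2: "M \<ge> 4*(pp^2+1)/3" and M3: "M \<ge> of_int \<bar>Q\<bar>" unfolding M_def by (simp_all add: le_max_iff_disj)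
  have "4*(pp^2+1)/3 > (0::rat)" by (simp add: add_nonneg_pos)
  then have Mpos: "M > 0" using M2 by linarith
  define eps where "eps = d / M"
  have eps0: "eps \<ge> 0" unfolding eps_def using d0 Mpos by simp
  have "pp * pp \<ge> 5 * 5" using pp5 by (intro mult_mono) auto
  then have pp2: "pp^2 \<ge> 25" by (simp add: power2_eq_square)
  have "d * pp^2 = 4 * (pp^2/4*d)" by simp
  then have dM: "d * pp^2 \<le> 4 * M" using M1 by linarith
  have eps_small: "eps \<le> 3/4"
  proof -
    have "d * 25 \<le> d * pp^2" using pp2 d0 by (intro mult_left_mono) auto
    then have "d * 25 \<le> 4 * M" using dM by linarith
    then show ?thesis unfolding eps_def using Mpos by (simp add: field_simps)
  qed
  have REC: "\<bar>Qn (Suc n)\<bar> \<le> d / \<bar>Qn n\<bar> + (if N dvd n then pp^2/4 else 1/4) * \<bar>Qn n\<bar>" for n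
  proof -
    have Qnz: "Qn n \<noteq> 0" using Q1[of n] by auto
    have close: "\<bar>b n - Pn n / Qn n\<bar> \<le> (if N dvd n then pp/2 else 1/2)"
      using assms(10)[of n] sbar_close[of p r "Pn n" "Qn n"] tbar_close[of p r "Pn n" "Qn n"] assms(1)
      unfolding pp_def by (auto simp: prime_gt_0_nat)
    have "\<bar>Qn (Suc n)\<bar> = \<bar>(of_int D - (b n * Qn n - Pn n)^2) / Qn n\<bar>" using assms(11,12)[of n] by simp
    also have "\<dots> \<le> d / \<bar>Qn n\<bar> + (if N dvd n then pp/2 else 1/2)^2 * \<bar>Qn n\<bar>"
      unfolding d_def by (rule step_real[OF close Qnz])
    also have "(if N dvd n then pp/2 else 1/2)^2 = (if N dvd n then pp^2/4 else (1/4::rat))"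
      by (simp add: power_divide)
    finally show ?thesis .
  qed
  have ppos: "pp > 0" using pp5 by simp
  have h4: "(4::rat)^N \<ge> (pp+1)^2"
  proof -
    have "real_of_nat (p + 1) \<le> real_of_nat (2^N)" using NF(1) by (simp only: of_nat_le_iff)
    then have "(of_nat (p + 1) :: rat) \<le> of_nat (2^N)" by (simp only: of_nat_le_iff)
    then have a: "pp + 1 \<le> 2^N" unfolding pp_def by simp
    have "(pp+1)^2 \<le> (2^N)^2" using a ppos by (intro power_mono) auto
    also have "(2^N)^2 = (4::rat)^N"
    proof -
      have "(2::rat)^N * 2^N = (2*2)^N" by (simp only: power_mult_distrib)
      then show ?thesis by (simp add: power2_eq_square)
    qed
    finally show ?thesis .
  qed
  have A: "(pp+1)^2 \<le> 2*(pp^2+1)"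
  proof -
    have "(pp - 1)^2 \<ge> 0" by simp
    then show ?thesis by (simp add: power2_eq_square algebra_simps)
  qed
  have B: "M*(2*pp+1) \<ge> 4*(pp^2+1)/3 * (2*pp+1)" using M2 ppos by (intro mult_right_mono) auto
  have Cc: "4*(pp^2+1)/3 * (2*pp+1) \<ge> 2*(pp^2+1)"
  proof -
    have "4*(2*pp+1)/3 \<ge> 2" using pp5 by simp
    then have "(pp^2+1) * (4*(2*pp+1)/3) \<ge> (pp^2+1) * 2" by (intro mult_left_mono) auto
    then show ?thesis by (simp add: algebra_simps)
  qed
  have MP: "M*(2*pp+1) \<ge> (pp+1)^2" using A B Cc by linarith
  have "(M - 1) * (pp+1)^2 \<ge> pp^2 * M"
  proof -
    have "(M - 1) * (pp+1)^2 - pp^2 * M = M*(2*pp+1) - (pp+1)^2" by (simp add: power2_eq_square algebra_simps)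
    then show ?thesis using MP by linarith
  qed
  have p1pos: "(pp+1)^2 > 0" using ppos by simp
  have "pp^2 * M / 4^N \<le> pp^2 * M / (pp+1)^2"
    using h4 p1pos Mpos by (intro divide_left_mono) auto
  also have "\<dots> \<le> M - 1" using \<open>(M - 1) * (pp+1)^2 \<ge> pp^2 * M\<close> p1pos by (simp add: divide_le_eq)
  finally have key: "pp^2 * M / 4^N + 4 * eps / 3 \<le> M" using eps_small by linarith
  define C where "C n \<longleftrightarrow> \<bar>Qn n\<bar> \<le> M \<or> (1 \<le> n mod N \<and> \<bar>Qn n\<bar> \<le> pp^2 * M / 4^(n mod N) + 4 * eps / 3)" for n
  have "C n" for n
  proof (induction n)
    case 0 show ?case unfolding C_def using assms(9) M3 by simp
  next
    case (Suc n)
    define x where "x = \<bar>Qn n\<bar>"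
    define x' where "x' = \<bar>Qn (Suc n)\<bar>"
    have x1: "x \<ge> 1" unfolding x_def by (rule Q1)
    have msuc: "Suc n mod N = (if Suc (n mod N) = N then 0 else Suc (n mod N))" by (rule mod_Suc)
    show ?case
    proof (cases "N dvd n")
      case True
      then have j0: "n mod N = 0" by simp
      then have xM: "x \<le> M" using Suc unfolding C_def x_def by simp
      have "x' \<le> d / x + pp^2/4 * x" using REC[of n] True unfolding x_def x'_def by simp
      also have "\<dots> \<le> max (d + pp^2/4) (d / M + pp^2/4 * M)" using x1 xM d0 by (intro chord) auto
      also have "\<dots> \<le> pp^2/4 * M + eps"
      proof -
        have "pp^2/4 * M \<ge> pp^2/4 * (pp^2/4*d + 1)" using M1 by (intro mult_left_mono) auto
        moreover have "pp^2/4 * (pp^2/4*d + 1) = (pp^2 * pp^2 / 16) * d + pp^2/4" by (simp add: algebra_simps)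
        moreover have "(pp^2 * pp^2 / 16) * d \<ge> 1 * d"
        proof -
          have "pp^2 * pp^2 \<ge> 25 * 25" using pp2 by (intro mult_mono) auto
          then have "pp^2 * pp^2 / 16 \<ge> 1" by simp
          then show ?thesis using d0 by (intro mult_right_mono) auto
        qed
        ultimately have "d + pp^2/4 \<le> pp^2/4 * M + eps" using eps0 by linarith
        moreover have "d / M + pp^2/4 * M \<le> pp^2/4 * M + eps" unfolding eps_def by simp
        ultimately show ?thesis by simp
      qed
      finally have bnd: "x' \<le> pp^2/4 * M + eps" .
      have "Suc n mod N = 1" using msuc j0 NF(2) by auto
      then show ?thesis unfolding C_def x'_def[symmetric] using bnd eps0 by simp
    next
      case False
      then have j1: "1 \<le> n mod N" by (simp add: dvd_eq_mod_eq_0)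
      have rec: "x' \<le> d / x + 1/4 * x" using REC[of n] False unfolding x_def x'_def by simp
      show ?thesis
      proof (cases "x \<le> M")
        case True
        have "x' \<le> max (d + 1/4) (d / M + 1/4 * M)" using rec chord[of x M d "1/4"] x1 True d0 by simp
        also have "\<dots> \<le> M"
        proof -
          have "d + 1/4 \<le> M"
          proof -
            have "d * 25 \<le> d * pp^2" using pp2 d0 by (intro mult_left_mono) auto
            moreover have "pp^2/4*d = (d*pp^2)/4" by simp
            ultimately show ?thesis using M1 d0 by linarith
          qed
          moreover have "d / M + 1/4 * M \<le> M" using eps_small Mpos M2 unfolding eps_def
          proof -
            have "4*(pp^2+1)/3 \<ge> 1" using pp2 by simp
            then show ?thesis using eps_small M2 unfolding eps_def by linarith
          qed
          ultimately show ?thesis by simp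
        qed
        finally show ?thesis unfolding C_def x'_def[symmetric] by simp
      next
        case False
        then have xb: "x \<le> pp^2 * M / 4^(n mod N) + 4 * eps / 3" using Suc unfolding C_def x_def by auto
        have "d / x \<le> d / M" using False Mpos d0 by (intro divide_left_mono) auto
        then have "x' \<le> eps + 1/4 * x" using rec unfolding eps_def by linarith
        also have "\<dots> \<le> eps + 1/4 * (pp^2 * M / 4^(n mod N) + 4 * eps / 3)" using xb by simp
        also have "\<dots> = pp^2 * M / 4^(Suc (n mod N)) + 4 * eps / 3" by (simp add: field_simps)
        finally have bnd: "x' \<le> pp^2 * M / 4^(Suc (n mod N)) + 4 * eps / 3" .
        show ?thesis
        proof (cases "Suc (n mod N) = N")
          case True
          then have "x' \<le> M" using bnd key by simp
          then show ?thesis unfolding C_def x'_def[symmetric] by simp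
        next
          case False
          then have "Suc n mod N = Suc (n mod N)" using msuc by simp
          then show ?thesis unfolding C_def x'_def[symmetric] using bnd by simp
        qed
      qed
    qed
  qed
  have final: "\<bar>Qn n\<bar> \<le> pp^2 / 4 * M + 1" for n
  proof -
    have pq: "pp^2 / 4 \<ge> 1" using pp2 by simp
    have MM: "M \<le> pp^2 / 4 * M" using pq Mpos by (metis mult_right_mono mult_1 less_imp_le)
    show ?thesis
    proof (cases "\<bar>Qn n\<bar> \<le> M")
      case True then show ?thesis using MM by linarith
    next
      case False
      then have j1: "1 \<le> n mod N" and xb: "\<bar>Qn n\<bar> \<le> pp^2 * M / 4^(n mod N) + 4 * eps / 3"
        using \<open>C n\<close> unfolding C_def by auto
      have "(4::rat)^(n mod N) \<ge> 4^1" using j1 by (intro power_increasing) auto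
      then have "pp^2 * M / 4^(n mod N) \<le> pp^2 * M / 4" using Mpos by (intro divide_left_mono) auto
      then show ?thesis using xb eps_small by simp
    qed
  qed
  then show ?thesis unfolding M_def pp_def d_def by blast
qed

end
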